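(* Let $\mathrm X$ be the Cantor set, let $\mathrm U,\mathrm V\subseteq\mathrm X$ be open with $\mathrm U\neq\mathrm X$, and let $h:\mathrm U\to\mathrm V$ be a homeomorphism. For $n\in\mathbb Z$ let $\mathrm X_{-n}=\mathrm{dom}(h^n)$ and $h_n=h^n:\mathrm X_{-n}\to\mathrm X_n$, and let $R=\{(r,x,s,y)\in\mathbb Z\times\mathrm X\times\mathbb Z\times\mathrm X: x\in\mathrm X_{s-r},\ h^{r-s}(x)=y\}$. Let $(\mathrm U_k)_{k\ge0}$ be an increasing sequence of clopen subsets of $\mathrm X$ with $\bigcup_k\mathrm U_k=\mathrm U$. For each $k$, let $g_k=h|_{\mathrm U_k}:\mathrm U_k\to h(\mathrm U_k)$, $\mathrm X^k_{-n}=\mathrm{dom}(g_k^n)$, and $R_k=\{(r,x,s,y)\in\mathbb Z\times\mathrm X\times\mathbb Z\times\mathrm X: x\in\mathrm X^k_{s-r},\ h^{r-s}(x)=y\}$. Then each $R_k$ is an equivalence relation on $\mathbb Z\times\mathrm X$ whose quotient space is Hausdorff (i.e. $R_k$ is proper), $R_k\subseteq R_{k+1}$ for all $k$, and $R=\bigcup_{k}R_k$. In particular $R$ is approximately proper.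
   Context: Here $\mathrm{dom}(h^n)$ denotes the domain of the $n$-fold composition of the partial bijection $h$ (for $n<0$, of $(h^{-1})^{|n|}$; $\mathrm{dom}(h^0)=\mathrm X$). These data define partial actions of $\mathbb Z$ on $\mathrm X$. An equivalence relation on a locally compact, second countable, Hausdorff space is proper if its quotient space is Hausdorff, and approximately proper if it is the union of an increasing sequence of proper equivalence relations. *)

theory Defs
  imports "HOL-Analysis.Analysis"
begin

definition cantor_set :: "real set" where
  "cantor_set = {x. \<exists>d::nat \<Rightarrow> nat. (\<forall>i. d i \<in> {0, 2}) \<and> x = (\<Sum>i. real (d i) / 3 ^ Suc i)}"

text \<open>Domain of the n-fold iterate of the partial map f with domain A, inside the space X.\<close>
fun pdom :: "'a set \<Rightarrow> 'a set \<Rightarrow> ('a \<Rightarrow> 'a) \<Rightarrow> nat \<Rightarrow> 'a set" where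
  "pdom X A f 0 = X"
| "pdom X A f (Suc n) = {x \<in> A. f x \<in> pdom X A f n}"

text \<open>Integer powers of a partial bijection f : A -> f`A with inverse f'.\<close>
definition idom :: "'a set \<Rightarrow> 'a set \<Rightarrow> ('a \<Rightarrow> 'a) \<Rightarrow> ('a \<Rightarrow> 'a) \<Rightarrow> int \<Rightarrow> 'a set" where
  "idom X A f f' n = (if n \<ge> 0 then pdom X A f (nat n) else pdom X (f ` A) f' (nat (- n)))"

definition ipow :: "('a \<Rightarrow> 'a) \<Rightarrow> ('a \<Rightarrow> 'a) \<Rightarrow> int \<Rightarrow> 'a \<Rightarrow> 'a" where
  "ipow f f' n = (if n \<ge> 0 then f ^^ nat n else f' ^^ nat (- n))"

text \<open>The relation {(r,x,s,y). x \<in> X_{s-r}, h^{r-s} x = y}, where X_{-n} = dom(h^n).\<close>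
definition orbit_rel :: "'a set \<Rightarrow> 'a set \<Rightarrow> ('a \<Rightarrow> 'a) \<Rightarrow> ('a \<Rightarrow> 'a) \<Rightarrow> ((int \<times> 'a) \<times> (int \<times> 'a)) set" where
  "orbit_rel X A f f' = {((r, x), (s, y)). x \<in> idom X A f f' (r - s) \<and> ipow f f' (r - s) x = y}"

definition proper_equiv :: "'a topology \<Rightarrow> ('a \<times> 'a) set \<Rightarrow> bool" where
  "proper_equiv T E \<longleftrightarrow> equiv (topspace T) E \<and>
     (\<exists>Q. quotient_map T Q (\<lambda>x. E `` {x}) \<and> Hausdorff_space Q)"

definition approx_proper :: "'a topology \<Rightarrow> ('a \<times> 'a) set \<Rightarrow> bool" where
  "approx_proper T E \<longleftrightarrow> (\<exists>Es :: nat \<Rightarrow> ('a \<times> 'a) set.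
     (\<forall>k. proper_equiv T (Es k)) \<and> (\<forall>k. Es k \<subseteq> Es (Suc k)) \<and> E = (\<Union>k. Es k))"

end

theory Submission
  imports Defs
begin

lemma pdom_char:
  assumes "A \<subseteq> X" "f ` A \<subseteq> X"
  shows "x \<in> pdom X A f n \<longleftrightarrow> x \<in> X \<and> (\<forall>j<n. (f^^j) x \<in> A)"
  using assms
proof (induction n arbitrary: x)
  case 0 then show ?case by simp
next
  case (Suc n)
  have "x \<in> pdom X A f (Suc n) \<longleftrightarrow> x \<in> A \<and> (f x \<in> X \<and> (\<forall>j<n. (f^^j) (f x) \<in> A))"
    using Suc by simp
  also have "\<dots> \<longleftrightarrow> x \<in> A \<and> (\<forall>j<n. (f^^Suc j) x \<in> A)"
    using Suc.prems by (auto simp: funpow_Suc_right simp del: funpow.simps)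
  also have "\<dots> \<longleftrightarrow> x \<in> X \<and> (\<forall>j<Suc n. (f^^j) x \<in> A)"
    using Suc.prems by (auto simp: All_less_Suc2 simp del: funpow.simps)
  finally show ?case .
qed

lemma pdom_X:
  assumes "A \<subseteq> X" "f ` A \<subseteq> X" "x \<in> pdom X A f n"
  shows "(f^^n) x \<in> X"
proof (cases n)
  case 0 then show ?thesis using assms by simp
next
  case (Suc m)
  then have "(f^^m) x \<in> A" using assms(3) pdom_char[OF assms(1,2), of x n] by (auto simp del: pdom.simps)
  then have "f ((f^^m) x) \<in> X" using assms(2) by blast
  moreover have "(f^^n) x = f ((f^^m) x)" using Suc by simp
  ultimately show ?thesis by simp
qed

lemma pdom_sub: "A \<subseteq> X \<Longrightarrow> f ` A \<subseteq> X \<Longrightarrow> pdom X A f n \<subseteq> X"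
  using pdom_char[of A X f _ n] by blast

lemma pdom_add:
  assumes "A \<subseteq> X" "f ` A \<subseteq> X"
  shows "x \<in> pdom X A f (a+b) \<longleftrightarrow> x \<in> pdom X A f a \<and> (f^^a) x \<in> pdom X A f b"
proof
  assume L: "x \<in> pdom X A f (a+b)"
  then have x: "x \<in> X" "\<forall>j<a+b. (f^^j) x \<in> A" using pdom_char[OF assms] by auto
  then have xa: "x \<in> pdom X A f a" using pdom_char[OF assms] by auto
  have "\<forall>j<b. (f^^j) ((f^^a) x) \<in> A"
  proof (intro allI impI)
    fix j assume "j < b"
    then have "(f^^(j+a)) x \<in> A" using x by auto
    then show "(f^^j) ((f^^a) x) \<in> A" by (simp add: funpow_add)
  qed
  then show "x \<in> pdom X A f a \<and> (f^^a) x \<in> pdom X A f b"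
    using xa pdom_X[OF assms xa] pdom_char[OF assms] by auto
next
  assume R: "x \<in> pdom X A f a \<and> (f^^a) x \<in> pdom X A f b"
  then have x: "x \<in> X" "\<forall>j<a. (f^^j) x \<in> A" "\<forall>j<b. (f^^j) ((f^^a) x) \<in> A"
    using pdom_char[OF assms] by auto
  have "\<forall>j<a+b. (f^^j) x \<in> A"
  proof (intro allI impI)
    fix j assume j: "j < a+b"
    show "(f^^j) x \<in> A"
    proof (cases "j < a")
      case True then show ?thesis using x by auto
    next
      case False
      then have "j = (j - a) + a" by simp
      then have "(f^^j) x = (f^^(j-a)) ((f^^a) x)" by (metis comp_apply funpow_add)
      then show ?thesis using x j False by auto
    qed
  qed
  then show "x \<in> pdom X A f (a+b)" using x pdom_char[OF assms] by auto
qed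

lemma pdom_back:
  assumes AX: "A \<subseteq> X" and fA: "f ` A \<subseteq> X" and inv: "\<And>x. x \<in> A \<Longrightarrow> g (f x) = x"
    and y: "y \<in> pdom X A f m"
  shows "(f^^m) y \<in> pdom X (f`A) g m \<and> (g^^m) ((f^^m) y) = y"
proof -
  have ch: "\<forall>j<m. (f^^j) y \<in> A" "y \<in> X" using pdom_char[OF AX fA] y by auto
  have key: "i \<le> m \<Longrightarrow> (g^^i) ((f^^m) y) = (f^^(m-i)) y" for i
  proof (induction i)
    case 0 then show ?case by simp
  next
    case (Suc i)
    then have e: "m - i = Suc (m - Suc i)" by simp
    have "(g^^Suc i) ((f^^m) y) = g ((f^^(m-i)) y)" using Suc by simp
    also have "\<dots> = g (f ((f^^(m - Suc i)) y))" by (simp add: e)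
    also have "\<dots> = (f^^(m - Suc i)) y" using inv ch Suc.prems by simp
    finally show ?case .
  qed
  have gA: "g ` (f ` A) \<subseteq> X" using inv AX by auto
  have fAX: "f ` A \<subseteq> X" by fact
  have "\<forall>j<m. (g^^j) ((f^^m) y) \<in> f ` A"
  proof (intro allI impI)
    fix j assume j: "j < m"
    then have e: "m - j = Suc (m - Suc j)" by simp
    have "(g^^j) ((f^^m) y) = f ((f^^(m - Suc j)) y)" using key[of j] j by (simp add: e)
    then show "(g^^j) ((f^^m) y) \<in> f ` A" using ch j by auto
  qed
  moreover have "(f^^m) y \<in> X" using pdom_X[OF AX fA y] .
  ultimately show ?thesis using pdom_char[OF fAX gA] key[of m] by auto
qed

lemma pdom_inj:
  assumes "A \<subseteq> X" "f ` A \<subseteq> X" "\<And>x. x \<in> A \<Longrightarrow> g (f x) = x"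
    "x \<in> pdom X A f m" "z \<in> pdom X A f m" "(f^^m) x = (f^^m) z"
  shows "x = z"
  using pdom_back[OF assms(1-3) assms(4)] pdom_back[OF assms(1-3) assms(5)] assms(6) by metis

lemma pdom_mono: "A \<subseteq> A' \<Longrightarrow> pdom X A f n \<subseteq> pdom X A' f n"
  by (induction n) auto

lemma pdom_open:
  assumes Aop: "openin (top_of_set X) A" and fc: "continuous_on A f" and fA: "f ` A \<subseteq> X"
  shows "openin (top_of_set X) (pdom X A f n) \<and> continuous_on (pdom X A f n) (f^^n)
        \<and> (f^^n) ` pdom X A f n \<subseteq> X"
proof (induction n)
  case 0 then show ?case by (simp add: continuous_on_id)
next
  case (Suc n)
  have eq: "pdom X A f (Suc n) = A \<inter> f -` pdom X A f n" by auto
  have fpi: "f \<in> A \<rightarrow> X" using fA by auto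
  have "openin (top_of_set A) (A \<inter> f -` pdom X A f n)"
    using continuous_openin_preimage[OF fc fpi] Suc by blast
  then have o: "openin (top_of_set X) (pdom X A f (Suc n))"
    unfolding eq using Aop by (rule openin_trans)
  have sub: "pdom X A f (Suc n) \<subseteq> A" by auto
  have c1: "continuous_on (pdom X A f (Suc n)) f"
    by (rule continuous_on_subset[OF fc sub])
  have sub2: "f ` pdom X A f (Suc n) \<subseteq> pdom X A f n" by auto
  have c2: "continuous_on (f ` pdom X A f (Suc n)) (f^^n)"
    using continuous_on_subset[OF _ sub2] Suc by blast
  have "continuous_on (pdom X A f (Suc n)) ((f^^n) \<circ> f)"
    using continuous_on_compose[OF c1 c2] .
  then have c: "continuous_on (pdom X A f (Suc n)) (f^^Suc n)"
    by (simp add: funpow_Suc_right del: funpow.simps)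
  have "(f^^Suc n) ` pdom X A f (Suc n) \<subseteq> X"
    using Suc sub2 by (auto simp: funpow_Suc_right simp del: funpow.simps pdom.simps)
  then show ?case using o c by simp
qed

lemma pdom_closed:
  assumes Acl: "closedin (top_of_set X) A" and fc: "continuous_on A f" and fA: "f ` A \<subseteq> X"
  shows "closedin (top_of_set X) (pdom X A f n)"
proof (induction n)
  case 0 then show ?case by simp
next
  case (Suc n)
  have eq: "pdom X A f (Suc n) = A \<inter> f -` pdom X A f n" by auto
  have fpi: "f \<in> A \<rightarrow> X" using fA by auto
  have "closedin (top_of_set A) (A \<inter> f -` pdom X A f n)"
    using continuous_closedin_preimage_gen[OF fc fpi] Suc by blast
  then show ?case unfolding eq using Acl by (rule closedin_trans)
qed


definition frel :: "'a set \<Rightarrow> 'a set \<Rightarrow> ('a \<Rightarrow> 'a) \<Rightarrow> ((int \<times> 'a) \<times> (int \<times> 'a)) set" where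
  "frel X A f = {((r,x),(s,y)). (s \<le> r \<and> x \<in> pdom X A f (nat (r-s)) \<and> y = (f^^nat(r-s)) x)
       \<or> (r < s \<and> y \<in> pdom X A f (nat (s-r)) \<and> x = (f^^nat(s-r)) y)}"

lemma orbit_eq:
  assumes AX: "A \<subseteq> X" and fA: "f ` A \<subseteq> X" and inv: "\<And>x. x \<in> A \<Longrightarrow> g (f x) = x"
  shows "orbit_rel X A f g = frel X A f"
proof -
  have inv2: "\<And>z. z \<in> f ` A \<Longrightarrow> f (g z) = z" using inv by auto
  have gA: "g ` (f ` A) \<subseteq> X" using inv AX by force
  have gfA: "g ` (f ` A) = A" using inv by force
  have "p \<in> orbit_rel X A f g \<longleftrightarrow> p \<in> frel X A f" for p :: "(int \<times> 'a) \<times> (int \<times> 'a)"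
  proof -
  obtain r x s y where p: "p = ((r,x),(s,y))" by (metis prod.collapse)
  have 1: "p \<in> frel X A f" if "p \<in> orbit_rel X A f g"
  proof -
    have o: "x \<in> idom X A f g (r - s) \<and> ipow f g (r - s) x = y"
      using p that by (simp add: orbit_rel_def)
    show "p \<in> frel X A f"
    proof (cases "s \<le> r")
      case True then show ?thesis using o p by (simp add: frel_def idom_def ipow_def)
    next
      case False
      then have "x \<in> pdom X (f`A) g (nat (s-r)) \<and> (g^^nat(s-r)) x = y"
        using o by (simp add: idom_def ipow_def)
      then have "y \<in> pdom X A f (nat (s-r)) \<and> (f^^nat(s-r)) y = x"
        using pdom_back[OF fA gA inv2, of x "nat (s-r)"] gfA by auto
      then show ?thesis using False p by (auto simp: frel_def)
    qed
  qed
  have 2: "p \<in> orbit_rel X A f g" if "p \<in> frel X A f"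
  proof -
    have o: "(s \<le> r \<and> x \<in> pdom X A f (nat (r-s)) \<and> y = (f^^nat(r-s)) x)
       \<or> (r < s \<and> y \<in> pdom X A f (nat (s-r)) \<and> x = (f^^nat(s-r)) y)"
      using p that by (simp add: frel_def)
    show "p \<in> orbit_rel X A f g"
    proof (cases "s \<le> r")
      case True then show ?thesis using o p by (auto simp: orbit_rel_def idom_def ipow_def)
    next
      case False
      then have y: "y \<in> pdom X A f (nat (s-r)) \<and> x = (f^^nat(s-r)) y" using o by auto
      then have "x \<in> pdom X (f`A) g (nat (s-r)) \<and> (g^^nat(s-r)) x = y"
        using pdom_back[OF AX fA inv, of y "nat (s-r)"] by auto
      then show ?thesis using False p by (simp add: orbit_rel_def idom_def ipow_def)
    qed
  qed
  show ?thesis using 1 2 by blast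
  qed
  then show ?thesis by blast
qed

context
  fixes X A :: "'a set" and f g :: "'a \<Rightarrow> 'a"
  assumes AX: "A \<subseteq> X" and fA: "f ` A \<subseteq> X" and inv: "\<And>x. x \<in> A \<Longrightarrow> g (f x) = x"
begin

lemma step_ff:
  assumes "x \<in> pdom X A f a" "y = (f^^a) x" "y \<in> pdom X A f b" "z = (f^^b) y"
  shows "x \<in> pdom X A f (a+b) \<and> z = (f^^(b+a)) x"
  using assms pdom_add[OF AX fA] by (simp add: funpow_add)

lemma step_fb:
  assumes "x \<in> pdom X A f a" "z \<in> pdom X A f b" "(f^^a) x = (f^^b) z" "b \<le> a"
  shows "x \<in> pdom X A f (a-b) \<and> z = (f^^(a-b)) x"
proof -
  have e: "a = (a-b) + b" using assms by simp
  have "x \<in> pdom X A f ((a-b) + b)" using assms(1,4) by simp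
  then have x: "x \<in> pdom X A f (a-b)" "(f^^(a-b)) x \<in> pdom X A f b"
    using pdom_add[OF AX fA, of x "a-b" b] by blast+
  have "(f^^b) ((f^^(a-b)) x) = (f^^a) x" using e by (metis add.commute comp_apply funpow_add)
  then have "(f^^(a-b)) x = z" using pdom_inj[OF AX fA inv x(2) assms(2)] assms(3) by simp
  then show ?thesis using x by simp
qed

lemma step_bf:
  assumes "y \<in> pdom X A f a" "x = (f^^a) y" "y \<in> pdom X A f b" "z = (f^^b) y" "a \<le> b"
  shows "x \<in> pdom X A f (b-a) \<and> z = (f^^(b-a)) x"
proof -
  have e: "b = a + (b-a)" using assms by simp
  have "y \<in> pdom X A f (a + (b-a))" using assms(3,5) by simp
  then have "(f^^a) y \<in> pdom X A f (b-a)"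
    using pdom_add[OF AX fA, of y a "b-a"] by blast
  moreover have "(f^^b) y = (f^^(b-a)) ((f^^a) y)"
  proof -
    have "(f^^((b-a)+a)) y = (f^^(b-a)) ((f^^a) y)" by (simp add: funpow_add)
    moreover have "(b-a)+a = b" using assms(5) by simp
    ultimately show ?thesis by simp
  qed
  ultimately show ?thesis using assms by simp
qed

lemma frel_equiv: "equiv (UNIV \<times> X) (frel X A f)"
proof (rule equivI)
  show "frel X A f \<subseteq> (UNIV \<times> X) \<times> (UNIV \<times> X)"
    using pdom_sub[OF AX fA] pdom_X[OF AX fA] by (fastforce simp: frel_def)
  show "refl_on (UNIV \<times> X) (frel X A f)"
  proof (rule refl_onI)
    fix p :: "int \<times> 'a" assume "p \<in> UNIV \<times> X" then show "(p,p) \<in> frel X A f"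
      by (cases p) (auto simp: frel_def)
  qed
  show "sym (frel X A f)"
    by (rule symI) (auto simp: frel_def not_less)
  show "trans (frel X A f)"
  proof (rule transI)
    fix p q w assume pq: "(p,q) \<in> frel X A f" and qw: "(q,w) \<in> frel X A f"
    obtain r x where p: "p = (r,x)" by (cases p)
    obtain s y where q: "q = (s,y)" by (cases q)
    obtain t z where w: "w = (t,z)" by (cases w)
    have pq': "(s \<le> r \<and> x \<in> pdom X A f (nat (r-s)) \<and> y = (f^^nat(r-s)) x)
       \<or> (r < s \<and> y \<in> pdom X A f (nat (s-r)) \<and> x = (f^^nat(s-r)) y)"
      using pq p q by (simp add: frel_def)
    have qw': "(t \<le> s \<and> y \<in> pdom X A f (nat (s-t)) \<and> z = (f^^nat(s-t)) y)
       \<or> (s < t \<and> z \<in> pdom X A f (nat (t-s)) \<and> y = (f^^nat(t-s)) z)"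
      using qw q w by (simp add: frel_def)
    have goal: "(t \<le> r \<and> x \<in> pdom X A f (nat (r-t)) \<and> z = (f^^nat(r-t)) x)
       \<or> (r < t \<and> z \<in> pdom X A f (nat (t-r)) \<and> x = (f^^nat(t-r)) z)"
    proof -
      consider (a) "s \<le> r" "t \<le> s" | (b) "s \<le> r" "s < t" | (c) "r < s" "t \<le> s" | (d) "r < s" "s < t"
        by linarith
      then show ?thesis
      proof cases
        case a
        then have h: "x \<in> pdom X A f (nat (r-s))" "y = (f^^nat(r-s)) x"
          "y \<in> pdom X A f (nat (s-t))" "z = (f^^nat(s-t)) y" using pq' qw' by auto
        have e: "nat (r-t) = nat (r-s) + nat (s-t)" "nat (r-t) = nat (s-t) + nat (r-s)" using a by auto
        show ?thesis using step_ff[OF h] a e(1) by (simp add: add.commute)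
      next
        case b
        then have h: "x \<in> pdom X A f (nat (r-s))" "z \<in> pdom X A f (nat (t-s))"
          "(f^^nat(r-s)) x = (f^^nat(t-s)) z" using pq' qw' by auto
        show ?thesis
        proof (cases "t \<le> r")
          case True
          have e: "nat (r-t) = nat (r-s) - nat (t-s)" "nat (t-s) \<le> nat (r-s)" using True b by auto
          show ?thesis using step_fb[OF h e(2)] e(1) True by auto
        next
          case False
          have e: "nat (t-r) = nat (t-s) - nat (r-s)" "nat (r-s) \<le> nat (t-s)" using False b by auto
          show ?thesis using step_fb[OF h(2) h(1) h(3)[symmetric] e(2)] e(1) False by auto
        qed
      next
        case c
        then have h: "y \<in> pdom X A f (nat (s-r))" "x = (f^^nat(s-r)) y"
          "y \<in> pdom X A f (nat (s-t))" "z = (f^^nat(s-t)) y" using pq' qw' by auto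
        show ?thesis
        proof (cases "t \<le> r")
          case True
          have e: "nat (r-t) = nat (s-t) - nat (s-r)" "nat (s-r) \<le> nat (s-t)" using True c by auto
          show ?thesis using step_bf[OF h e(2)] e(1) True by auto
        next
          case False
          have e: "nat (t-r) = nat (s-r) - nat (s-t)" "nat (s-t) \<le> nat (s-r)" using False c by auto
          show ?thesis using step_bf[OF h(3) h(4) h(1) h(2) e(2)] e(1) False by auto
        qed
      next
        case d
        then have h: "z \<in> pdom X A f (nat (t-s))" "y = (f^^nat(t-s)) z"
          "y \<in> pdom X A f (nat (s-r))" "x = (f^^nat(s-r)) y" using pq' qw' by auto
        have e: "nat (t-r) = nat (t-s) + nat (s-r)" "nat (t-r) = nat (s-r) + nat (t-s)" using d by auto
        show ?thesis using step_ff[OF h] d e(1) by (simp add: add.commute)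
      qed
    qed
    then show "(p,w) \<in> frel X A f" using p w by (simp add: frel_def)
  qed
qed

end


lemma proper_from:
  assumes eq: "equiv (topspace T) E"
  and sat: "\<And>W. openin T W \<Longrightarrow> openin T {p \<in> topspace T. \<exists>q\<in>W. (p,q) \<in> E}"
  and sep: "\<And>p q. p \<in> topspace T \<Longrightarrow> q \<in> topspace T \<Longrightarrow> (p,q) \<notin> E \<Longrightarrow>
     \<exists>W1 W2. openin T W1 \<and> openin T W2 \<and> p \<in> W1 \<and> q \<in> W2 \<and> (\<forall>a\<in>W1. \<forall>b\<in>W2. (a,b) \<notin> E)"
  shows "proper_equiv T E"
proof -
  have sy: "\<And>a b. (a,b) \<in> E \<Longrightarrow> (b,a) \<in> E" using eq by (meson equivE symD)
  have tr: "\<And>a b c. (a,b) \<in> E \<Longrightarrow> (b,c) \<in> E \<Longrightarrow> (a,c) \<in> E" using eq by (meson equivE transD)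
  have rf: "\<And>a. a \<in> topspace T \<Longrightarrow> (a,a) \<in> E" using eq by (meson equivE refl_onD)
  have sb: "\<And>a b. (a,b) \<in> E \<Longrightarrow> a \<in> topspace T \<and> b \<in> topspace T" using eq
    unfolding equiv_def by blast
  define \<pi> where "\<pi> = (\<lambda>x. E``{x})"
  have piE: "\<And>a b. a \<in> topspace T \<Longrightarrow> b \<in> topspace T \<Longrightarrow> \<pi> a = \<pi> b \<longleftrightarrow> (a,b) \<in> E"
    unfolding \<pi>_def using eq_equiv_class_iff[OF eq] by blast
  define L where "L = (\<lambda>U. U \<subseteq> \<pi> ` topspace T \<and> openin T {x \<in> topspace T. \<pi> x \<in> U})"
  have ist: "istopology L"
    unfolding istopology_def
  proof (intro conjI allI impI ballI)
    fix S S' assume "L S" "L S'"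
    moreover have "{x \<in> topspace T. \<pi> x \<in> S \<inter> S'} = {x \<in> topspace T. \<pi> x \<in> S} \<inter> {x \<in> topspace T. \<pi> x \<in> S'}"
      by auto
    ultimately show "L (S \<inter> S')" unfolding L_def by auto
  next
    fix K assume K: "\<forall>S\<in>K. L S"
    have e: "{x \<in> topspace T. \<pi> x \<in> \<Union>K} = \<Union>((\<lambda>S. {x \<in> topspace T. \<pi> x \<in> S}) ` K)" by auto
    have "openin T (\<Union>((\<lambda>S. {x \<in> topspace T. \<pi> x \<in> S}) ` K))"
      using K unfolding L_def by (intro openin_Union) auto
    then show "L (\<Union>K)" using K e unfolding L_def by auto
  qed
  define Q where "Q = topology L"
  have oQ: "openin Q = L" unfolding Q_def using topology_inverse'[OF ist] .
  have "{x \<in> topspace T. \<pi> x \<in> \<pi> ` topspace T} = topspace T" by auto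
  then have Lall: "L (\<pi> ` topspace T)" unfolding L_def by auto
  have tQ: "topspace Q = \<pi> ` topspace T"
  proof
    show "topspace Q \<subseteq> \<pi> ` topspace T"
    proof
      fix c assume "c \<in> topspace Q"
      then obtain S where S: "openin Q S" "c \<in> S" unfolding topspace_def by blast
      then have "L S" using oQ by simp
      then show "c \<in> \<pi> ` topspace T" using S(2) unfolding L_def by blast
    qed
    show "\<pi> ` topspace T \<subseteq> topspace Q" using openin_subset[of Q "\<pi> ` topspace T"] oQ Lall by simp
  qed
  have qm: "quotient_map T Q \<pi>"
    unfolding quotient_map_def tQ oQ L_def by auto
  have "Hausdorff_space Q"
    unfolding Hausdorff_space_def
  proof (intro allI impI)
    fix c1 c2 assume c: "c1 \<in> topspace Q \<and> c2 \<in> topspace Q \<and> c1 \<noteq> c2"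
    then obtain p q where pq: "p \<in> topspace T" "q \<in> topspace T" "c1 = \<pi> p" "c2 = \<pi> q"
      using tQ by auto
    have "(p,q) \<notin> E"
    proof
      assume "(p,q) \<in> E"
      then have "\<pi> p = \<pi> q" using piE[OF pq(1,2)] by blast
      then show False using c pq(3,4) by simp
    qed
    then obtain W1 W2 where W: "openin T W1" "openin T W2" "p \<in> W1" "q \<in> W2"
      "\<forall>a\<in>W1. \<forall>b\<in>W2. (a,b) \<notin> E" using sep[OF pq(1,2)] by blast
    define S1 where "S1 = {p \<in> topspace T. \<exists>q\<in>W1. (p,q) \<in> E}"
    define S2 where "S2 = {p \<in> topspace T. \<exists>q\<in>W2. (p,q) \<in> E}"
    have satd: "{x \<in> topspace T. \<pi> x \<in> \<pi> ` S} = S"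
      if Sdef: "S = {p \<in> topspace T. \<exists>q\<in>W. (p,q) \<in> E}" for S W
    proof
      show "{x \<in> topspace T. \<pi> x \<in> \<pi> ` S} \<subseteq> S"
      proof
        fix x assume "x \<in> {x \<in> topspace T. \<pi> x \<in> \<pi> ` S}"
        then obtain a where a: "x \<in> topspace T" "a \<in> S" "\<pi> x = \<pi> a" by auto
        then obtain w where w: "w \<in> W" "(a,w) \<in> E" "a \<in> topspace T" using Sdef by auto
        have "(x,a) \<in> E" using piE a w by blast
        then have "(x,w) \<in> E" using tr w by blast
        then show "x \<in> S" using Sdef a w by auto
      qed
      show "S \<subseteq> {x \<in> topspace T. \<pi> x \<in> \<pi> ` S}" using Sdef by auto
    qed
    have o1: "openin Q (\<pi> ` S1)" unfolding oQ L_def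
      using satd[OF S1_def] sat[OF W(1)] S1_def by auto
    have o2: "openin Q (\<pi> ` S2)" unfolding oQ L_def
      using satd[OF S2_def] sat[OF W(2)] S2_def by auto
    have i1: "c1 \<in> \<pi> ` S1" using pq W rf unfolding S1_def by blast
    have i2: "c2 \<in> \<pi> ` S2" using pq W rf unfolding S2_def by blast
    have "disjnt (\<pi> ` S1) (\<pi> ` S2)"
    proof -
      have "c \<notin> \<pi> ` S2" if c1: "c \<in> \<pi> ` S1" for c
      proof
      assume c2: "c \<in> \<pi> ` S2"
      from c1 c2 obtain a b w1 w2 where ab: "a \<in> topspace T" "b \<in> topspace T" "\<pi> a = \<pi> b"
        "w1 \<in> W1" "w2 \<in> W2" "(a,w1) \<in> E" "(b,w2) \<in> E"
        unfolding S1_def S2_def by auto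
      then have "(a,b) \<in> E" using piE by blast
      then have "(w1,w2) \<in> E" using ab sy tr by blast
      then show False using W ab by blast
      qed
      then show ?thesis unfolding disjnt_def by blast
    qed
    then show "\<exists>U V. openin Q U \<and> openin Q V \<and> c1 \<in> U \<and> c2 \<in> V \<and> disjnt U V"
      using o1 o2 i1 i2 by blast
  qed
  then show ?thesis unfolding proper_equiv_def using eq qm \<pi>_def by blast
qed


lemma orbit_proper:
  fixes X A :: "'a::t2_space set" and f g :: "'a \<Rightarrow> 'a"
  assumes AX: "A \<subseteq> X" and Aop: "openin (top_of_set X) A" and Acl: "closedin (top_of_set X) A"
    and fc: "continuous_on A f" and Bop: "openin (top_of_set X) (f ` A)"
    and gc: "continuous_on (f ` A) g" and inv: "\<And>x. x \<in> A \<Longrightarrow> g (f x) = x"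
  shows "proper_equiv (prod_topology (euclidean :: int topology) (top_of_set X)) (orbit_rel X A f g)"
proof -
  let ?T = "prod_topology (euclidean :: int topology) (top_of_set X)"
  let ?E = "orbit_rel X A f g"
  let ?D = "idom X A f g" and ?P = "ipow f g"
  have fA: "f ` A \<subseteq> X" using openin_imp_subset[OF Bop] .
  have gA: "g ` (f ` A) \<subseteq> X" using inv AX by force
  have tsp: "topspace ?T = UNIV \<times> X" by simp
  have EF: "?E = frel X A f" using orbit_eq[OF AX fA inv] .
  have eq: "equiv (topspace ?T) ?E" unfolding tsp EF using frel_equiv[OF AX fA inv] .
  have sy: "\<And>a b. (a,b) \<in> ?E \<Longrightarrow> (b,a) \<in> ?E" using eq by (meson equivE symD)
  have Erel: "((r,x),(s,y)) \<in> ?E \<longleftrightarrow> x \<in> ?D (r-s) \<and> ?P (r-s) x = y" for r s x y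
    by (simp add: orbit_rel_def)
  have DP: "openin (top_of_set X) (?D n) \<and> continuous_on (?D n) (?P n) \<and> ?P n ` ?D n \<subseteq> X" for n
  proof (cases "0 \<le> n")
    case True then show ?thesis using pdom_open[OF Aop fc fA, of "nat n"] by (simp add: idom_def ipow_def)
  next
    case False then show ?thesis using pdom_open[OF Bop gc gA, of "nat (-n)"] by (simp add: idom_def ipow_def)
  qed
  have Dcl: "closedin (top_of_set X) (?D n)" if "0 \<le> n" for n
    using pdom_closed[OF Acl fc fA, of "nat n"] that by (simp add: idom_def)
  have DX: "?D n \<subseteq> X" for n using DP openin_imp_subset by blast
  have osing: "openin (euclidean :: int topology) {r}" for r by (simp add: open_discrete)
  show ?thesis
  proof (rule proper_from[OF eq])
    fix W assume W: "openin ?T W"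
    show "openin ?T {p \<in> topspace ?T. \<exists>q\<in>W. (p,q) \<in> ?E}"
      unfolding openin_prod_topology_alt
    proof (intro allI impI)
      fix s y assume "(s,y) \<in> {p \<in> topspace ?T. \<exists>q\<in>W. (p,q) \<in> ?E}"
      then obtain q where q: "q \<in> W" "((s,y),q) \<in> ?E" by blast
      obtain r x where rxq: "q = (r,x)" by (metis surj_pair)
      have rx: "(r,x) \<in> W" "((s,y),(r,x)) \<in> ?E" using q unfolding rxq by blast+
      let ?n = "s - r"
      have Wa: "\<forall>(a::int) b. (a,b) \<in> W \<longrightarrow> (\<exists>U V. openin euclidean U \<and> openin (top_of_set X) V \<and> a \<in> U \<and> b \<in> V \<and> U \<times> V \<subseteq> W)"
        using W unfolding openin_prod_topology_alt .
      have "\<exists>U V. openin euclidean U \<and> openin (top_of_set X) V \<and> r \<in> U \<and> x \<in> V \<and> U \<times> V \<subseteq> W"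
        using spec[OF spec[OF Wa, of r], of x] rx(1) by (rule mp)
      then obtain U0 N where UN: "openin euclidean U0" "openin (top_of_set X) N" "r \<in> U0" "x \<in> N" "U0 \<times> N \<subseteq> W"
        by blast
      define M where "M = ?D ?n \<inter> ?P ?n -` N"
      have pi: "?P ?n \<in> ?D ?n \<rightarrow> X" using DP[of ?n] by auto
      have "openin (top_of_set (?D ?n)) M"
        unfolding M_def using continuous_openin_preimage[OF _ pi UN(2)] DP[of ?n] by blast
      then have Mo: "openin (top_of_set X) M" using DP[of ?n] openin_trans by blast
      have yM: "y \<in> M" using Erel[where r=s and s=r and x=y and y=x] rx(2) UN(4) unfolding M_def by blast
      have "{s} \<times> M \<subseteq> {p \<in> topspace ?T. \<exists>q\<in>W. (p,q) \<in> ?E}"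
      proof
        fix p assume "p \<in> {s} \<times> M"
        then obtain y' where p: "p = (s,y')" "y' \<in> ?D ?n" "?P ?n y' \<in> N" unfolding M_def by auto
        have "(r, ?P ?n y') \<in> W" using UN p by blast
        moreover have "(p, (r, ?P ?n y')) \<in> ?E" using p(1,2) Erel[where r=s and s=r and x=y' and y="?P ?n y'"] by simp
        moreover have "p \<in> topspace ?T" using p(1,2) DX[of ?n] by auto
        ultimately show "p \<in> {p \<in> topspace ?T. \<exists>q\<in>W. (p,q) \<in> ?E}" by blast
      qed
      then show "\<exists>U V. openin euclidean U \<and> openin (top_of_set X) V \<and> s \<in> U \<and> y \<in> V \<and> U \<times> V
              \<subseteq> {p \<in> topspace ?T. \<exists>q\<in>W. (p,q) \<in> ?E}"
        using osing Mo yM by blast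
    qed
  next
    have sep1: "\<exists>W1 W2. openin ?T W1 \<and> openin ?T W2 \<and> (r,x) \<in> W1 \<and> (s,y) \<in> W2 \<and>
                 (\<forall>a\<in>W1. \<forall>b\<in>W2. (a,b) \<notin> ?E)"
      if xy: "x \<in> X" "y \<in> X" "s \<le> r" "((r,x),(s,y)) \<notin> ?E" for r s x y
    proof (cases "x \<in> ?D (r-s)")
      case False
      define W1 where "W1 = {r} \<times> (X - ?D (r-s))"
      define W2 where "W2 = {s} \<times> X"
      have "openin (top_of_set X) (X - ?D (r-s))"
        using Dcl[of "r-s"] xy(3) unfolding closedin_def by simp
      then have o1: "openin ?T W1" unfolding W1_def openin_prod_Times_iff using osing by blast
      have o2: "openin ?T W2" unfolding W2_def openin_prod_Times_iff using osing by auto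
      have "\<forall>a\<in>W1. \<forall>b\<in>W2. (a,b) \<notin> ?E" unfolding W1_def W2_def using Erel by auto
      then show ?thesis using o1 o2 xy False unfolding W1_def W2_def by blast
    next
      case True
      let ?n = "r - s"
      have ne: "?P ?n x \<noteq> y" using True xy(4) Erel by auto
      then obtain O1 O2 where O: "open O1" "open O2" "?P ?n x \<in> O1" "y \<in> O2" "O1 \<inter> O2 = {}"
        unfolding separation_t2 by blast
      define W1 where "W1 = {r} \<times> (?D ?n \<inter> ?P ?n -` O1)"
      define W2 where "W2 = {s} \<times> (X \<inter> O2)"
      have "openin (top_of_set (?D ?n)) (?D ?n \<inter> ?P ?n -` O1)"
        using continuous_openin_preimage_gen[OF _ O(1)] DP[of ?n] by blast
      then have "openin (top_of_set X) (?D ?n \<inter> ?P ?n -` O1)" using DP[of ?n] openin_trans by blast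
      then have o1: "openin ?T W1" unfolding W1_def openin_prod_Times_iff using osing by blast
      have "openin (top_of_set X) (X \<inter> O2)" using O(2) by blast
      then have o2: "openin ?T W2" unfolding W2_def openin_prod_Times_iff using osing by blast
      have "\<forall>a\<in>W1. \<forall>b\<in>W2. (a,b) \<notin> ?E" unfolding W1_def W2_def using Erel O(5) by auto
      then show ?thesis using o1 o2 xy True O unfolding W1_def W2_def by blast
    qed
    fix p q assume p: "p \<in> topspace ?T" and q: "q \<in> topspace ?T" and npq: "(p,q) \<notin> ?E"
    obtain r x where rx: "p = (r,x)" by (cases p)
    obtain s y where sy': "q = (s,y)" by (cases q)
    have xX: "x \<in> X" "y \<in> X" using p q rx sy' by auto
    show "\<exists>W1 W2. openin ?T W1 \<and> openin ?T W2 \<and> p \<in> W1 \<and> q \<in> W2 \<and> (\<forall>a\<in>W1. \<forall>b\<in>W2. (a,b) \<notin> ?E)"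
    proof (cases "s \<le> r")
      case True then show ?thesis using sep1[OF xX True] npq rx sy' by blast
    next
      case False
      have nE: "((s,y),(r,x)) \<notin> ?E" using npq sy rx sy' by blast
      have le: "r \<le> s" using False by simp
      obtain W2 W1 where W: "openin ?T W2" "openin ?T W1" "(s,y) \<in> W2" "(r,x) \<in> W1"
        "\<forall>a\<in>W2. \<forall>b\<in>W1. (a,b) \<notin> ?E" using sep1[OF xX(2,1) le nE] by blast
      then have "\<forall>a\<in>W1. \<forall>b\<in>W2. (a,b) \<notin> ?E" using sy by blast
      then show ?thesis using W rx sy' by blast
    qed
  qed
qed

lemma orbit_rel_mono: "A \<subseteq> A' \<Longrightarrow> orbit_rel X A f g \<subseteq> orbit_rel X A' f g"
proof
  fix p assume AA: "A \<subseteq> A'" and p: "p \<in> orbit_rel X A f g"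
  have m1: "pdom X A f n \<subseteq> pdom X A' f n" for n using pdom_mono[OF AA] .
  have m2: "pdom X (f`A) g n \<subseteq> pdom X (f`A') g n" for n using pdom_mono AA by (metis image_mono)
  have "idom X A f g n \<subseteq> idom X A' f g n" for n using m1 m2 by (simp add: idom_def)
  then show "p \<in> orbit_rel X A' f g" using p unfolding orbit_rel_def by auto
qed

lemma pdom_UN:
  assumes C: "\<And>k. C k \<subseteq> C (Suc k)"
  shows "x \<in> pdom X (\<Union>k. C k) f n \<Longrightarrow> \<exists>k. x \<in> pdom X (C k) f n"
proof (induction n arbitrary: x)
  case 0 then show ?case by simp
next
  case (Suc n)
  then obtain k1 where k1: "x \<in> C k1" by auto
  obtain k2 where k2: "f x \<in> pdom X (C k2) f n" using Suc by auto
  have mono: "C i \<subseteq> C j" if "i \<le> j" for i j using lift_Suc_mono_le[of C, OF C that] .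
  have "x \<in> C (max k1 k2)" using k1 mono[of k1 "max k1 k2"] by auto
  moreover have "f x \<in> pdom X (C (max k1 k2)) f n" using k2 pdom_mono[OF mono[of k2 "max k1 k2"]] by auto
  ultimately show ?case by auto
qed

lemma orbit_UN:
  assumes C: "\<And>k. C k \<subseteq> C (Suc k)"
  shows "orbit_rel X (\<Union>k. C k) f g = (\<Union>k. orbit_rel X (C k) f g)"
proof
  show "(\<Union>k. orbit_rel X (C k) f g) \<subseteq> orbit_rel X (\<Union>k. C k) f g"
    by (intro UN_least orbit_rel_mono) blast
  show "orbit_rel X (\<Union>k. C k) f g \<subseteq> (\<Union>k. orbit_rel X (C k) f g)"
  proof
    fix p assume p: "p \<in> orbit_rel X (\<Union>k. C k) f g"
    obtain r x s y where pe: "p = ((r,x),(s,y))" by (metis prod.collapse)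
    have o: "x \<in> idom X (\<Union>k. C k) f g (r-s)" "ipow f g (r-s) x = y"
      using p pe by (auto simp: orbit_rel_def)
    have "\<exists>k. x \<in> idom X (C k) f g (r-s)"
    proof (cases "0 \<le> r - s")
      case True then show ?thesis using o pdom_UN[of C, OF C] by (simp add: idom_def)
    next
      case False
      have C': "\<And>k. f ` C k \<subseteq> f ` C (Suc k)" using C by (simp add: image_mono)
      have "f ` (\<Union>k. C k) = (\<Union>k. f ` C k)" by auto
      then show ?thesis using o False pdom_UN[of "\<lambda>k. f ` C k", OF C', of x X g] by (simp add: idom_def)
    qed
    then show "p \<in> (\<Union>k. orbit_rel X (C k) f g)" using o pe by (auto simp: orbit_rel_def)
  qed
qed


theorem mainTheorem8:
  fixes U V :: "real set" and h h' :: "real \<Rightarrow> real" and Us :: "nat \<Rightarrow> real set"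
  assumes "openin (top_of_set cantor_set) U"
    and "openin (top_of_set cantor_set) V"
    and "U \<noteq> cantor_set"
    and "homeomorphism U V h h'"
    and "\<And>k. closedin (top_of_set cantor_set) (Us k)"
    and "\<And>k. openin (top_of_set cantor_set) (Us k)"
    and "\<And>k. Us k \<subseteq> Us (Suc k)"
    and "(\<Union>k. Us k) = U"
  shows "(\<forall>k. proper_equiv (prod_topology (euclidean :: int topology) (top_of_set cantor_set))
                (orbit_rel cantor_set (Us k) h h' ))
       \<and> (\<forall>k. orbit_rel cantor_set (Us k) h h' \<subseteq> orbit_rel cantor_set (Us (Suc k)) h h')
       \<and> orbit_rel cantor_set U h h' = (\<Union>k. orbit_rel cantor_set (Us k) h h')
       \<and> approx_proper (prod_topology (euclidean :: int topology) (top_of_set cantor_set))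
           (orbit_rel cantor_set U h h')"
proof -
  note Uo = assms(1) and Vo = assms(2) and hom = assms(4) and Ucl = assms(5) and Uop = assms(6)
    and Umono = assms(7) and Uun = assms(8)
  have hc: "continuous_on U h" and hc': "continuous_on V h'" and hUV: "h ` U = V"
    and hinv: "\<And>x. x \<in> U \<Longrightarrow> h' (h x) = x"
    using hom unfolding homeomorphism_def by auto
  have UX: "U \<subseteq> cantor_set" using openin_imp_subset[OF Uo] .
  have P: "proper_equiv (prod_topology (euclidean :: int topology) (top_of_set cantor_set))
                (orbit_rel cantor_set (Us k) h h')" for k
  proof -
    have AU: "Us k \<subseteq> U" using Uun by blast
    have AX: "Us k \<subseteq> cantor_set" using closedin_imp_subset[OF Ucl[of k]] .
    have fc: "continuous_on (Us k) h" using continuous_on_subset[OF hc AU] .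
    have "openin (top_of_set U) (Us k)" using openin_subset_trans[OF Uop[of k] AU UX] .
    then have "openin (top_of_set V) (h ` Us k)" using homeomorphism_imp_open_map[OF hom] by blast
    then have Bop: "openin (top_of_set cantor_set) (h ` Us k)" using Vo openin_trans by blast
    have BV: "h ` Us k \<subseteq> V" using AU hUV by blast
    have gc: "continuous_on (h ` Us k) h'" using continuous_on_subset[OF hc' BV] .
    have inv: "\<And>x. x \<in> Us k \<Longrightarrow> h' (h x) = x" using hinv AU by blast
    show ?thesis using orbit_proper[OF AX Uop[of k] Ucl[of k] fc Bop gc inv] .
  qed
  have Mo: "orbit_rel cantor_set (Us k) h h' \<subseteq> orbit_rel cantor_set (Us (Suc k)) h h'" for k
    using orbit_rel_mono[OF Umono[of k]] .
  have Un: "orbit_rel cantor_set U h h' = (\<Union>k. orbit_rel cantor_set (Us k) h h')"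
    using orbit_UN[of Us, OF Umono, of cantor_set h h'] Uun by simp
  have ap: "approx_proper (prod_topology (euclidean :: int topology) (top_of_set cantor_set))
           (orbit_rel cantor_set U h h')"
    unfolding approx_proper_def
    apply (rule exI[of _ "\<lambda>k. orbit_rel cantor_set (Us k) h h'"])
    using P Mo Un by simp
  show ?thesis by (intro conjI allI P Mo Un ap)
qed

end
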